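(* Let $\mathbf{X}$ be a set of discrete random variables with sample space $\Omega(\mathbf{X})$, let $O$ be a positive unital circuit over $\mathbf{X}$, let $\rho$ be a density matrix of matching size, and let $q:\Omega(\mathbf{X})\to[0,1]$. Let $Q(\mathbf{x})=q(\mathbf{x})O(\mathbf{x})$ (a NoisePUnC). Then $\pi_{\mathbf{X}}(\mathbf{x})=\operatorname{Tr}[Q(\mathbf{x})\rho]$ is a sub-complete probability distribution: $\pi_{\mathbf{X}}(\mathbf{x})\ge 0$ for all $\mathbf{x}$ and $\sum_{\mathbf{x}\in\Omega(\mathbf{X})}\pi_{\mathbf{X}}(\mathbf{x})\le1$.
   Context: A density matrix is a PSD complex matrix of trace one; a POVM is a finite family of PSD matrices summing to the identity. A quantum operation from $d\times d$ to $d'\times d'$ matrices is $\Phi(A)=\sum_jK_jAK_j^*$ with $d'\times d$ matrices $K_j$, $\sum_jK_j^*K_j\le\mathbb{1}$ (Loewner order); it is unital if $\Phi(\mathbb{1}_d)=\mathbb{1}_{d'}$. A partition circuit over $\mathbf{X}=\{X_0,\dots,X_{N-1}\}$ is a rooted binary tree whose leaves are in bijection with the variables (leaf $k$ carries $X_k$ with finite sample space $\Omega(X_k)$), each internal unit $k$ having two children $k_l,k_r$; $\mathbf{x}_k$ denotes an assignment to the variables at leaves below $k$. A positive unital circuit assigns to each leaf $k$ a POVM $\{E_{x_k}\}_{x_k\in\Omega(X_k)}$ and to each internal unit $k$ a unital quantum operation $\Phi_k$, computing $O_k(\mathbf{x}_k)=E_{x_k}$ at leaves and $O_k(\mathbf{x}_k)=\Phi_k(O_{k_l}(\mathbf{x}_{k_l})\otimes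 O_{k_r}(\mathbf{x}_{k_r}))$ at internal units ($\otimes$ the Kronecker product); $O(\mathbf{x})=O_{\mathrm{root}}(\mathbf{x})$. A function on a finite set is a sub-complete probability distribution if its values are nonnegative and sum to at most $1$. *)

theory Defs
  imports "Jordan_Normal_Form.Schur_Decomposition"
begin

definition mtrace :: "complex mat \<Rightarrow> complex" where
  "mtrace A = (\<Sum>i<dim_row A. A $$ (i, i))"

definition psd :: "nat \<Rightarrow> complex mat \<Rightarrow> bool" where
  "psd n A \<longleftrightarrow> A \<in> carrier_mat n n \<and>
     (\<forall>v \<in> carrier_vec n. (let z = conjugate v \<bullet> (A *\<^sub>v v) in z \<in> \<real> \<and> 0 \<le> Re z))"

definition loewner_le :: "nat \<Rightarrow> complex mat \<Rightarrow> complex mat \<Rightarrow> bool" where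
  "loewner_le n A B \<longleftrightarrow> A \<in> carrier_mat n n \<and> B \<in> carrier_mat n n \<and> psd n (B - A)"

definition density_matrix :: "nat \<Rightarrow> complex mat \<Rightarrow> bool" where
  "density_matrix n \<rho> \<longleftrightarrow> psd n \<rho> \<and> mtrace \<rho> = 1"

definition msum :: "nat \<Rightarrow> ('i \<Rightarrow> complex mat) \<Rightarrow> 'i set \<Rightarrow> complex mat" where
  "msum n f S = mat n n (\<lambda>(i, j). \<Sum>s\<in>S. f s $$ (i, j))"

definition povm :: "nat \<Rightarrow> 'v set \<Rightarrow> ('v \<Rightarrow> complex mat) \<Rightarrow> bool" where
  "povm n S E \<longleftrightarrow> finite S \<and> (\<forall>v\<in>S. psd n (E v)) \<and> msum n E S = 1\<^sub>m n"

definition kron :: "complex mat \<Rightarrow> complex mat \<Rightarrow> complex mat" where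
  "kron A B = mat (dim_row A * dim_row B) (dim_col A * dim_col B)
     (\<lambda>(i, j). A $$ (i div dim_row B, j div dim_col B) * B $$ (i mod dim_row B, j mod dim_col B))"

definition kraus_apply :: "nat \<Rightarrow> complex mat list \<Rightarrow> complex mat \<Rightarrow> complex mat" where
  "kraus_apply d' Ks A = foldr (\<lambda>K M. K * A * mat_adjoint K + M) Ks (0\<^sub>m d' d')"

definition quantum_operation :: "nat \<Rightarrow> nat \<Rightarrow> complex mat list \<Rightarrow> bool" where
  "quantum_operation d d' Ks \<longleftrightarrow> (\<forall>K \<in> set Ks. K \<in> carrier_mat d' d) \<and>
     loewner_le d (foldr (\<lambda>K M. mat_adjoint K * K + M) Ks (0\<^sub>m d d)) (1\<^sub>m d)"

definition unital_qop :: "nat \<Rightarrow> nat \<Rightarrow> complex mat list \<Rightarrow> bool" where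
  "unital_qop d d' Ks \<longleftrightarrow> quantum_operation d d' Ks \<and> kraus_apply d' Ks (1\<^sub>m d) = 1\<^sub>m d'"

text \<open>A leaf carries a variable index k and a POVM indexed by the values of X_k;
  an internal unit carries its output dimension and the Kraus operators of its quantum operation.\<close>
datatype 'v pcirc = PLeaf nat "'v \<Rightarrow> complex mat" | PNode nat "complex mat list" "'v pcirc" "'v pcirc"

fun leaves :: "'v pcirc \<Rightarrow> nat list" where
  "leaves (PLeaf k E) = [k]"
| "leaves (PNode d' Ks l r) = leaves l @ leaves r"

fun pun_circuit :: "(nat \<Rightarrow> 'v set) \<Rightarrow> nat \<Rightarrow> 'v pcirc \<Rightarrow> bool" where
  "pun_circuit \<Omega> d (PLeaf k E) \<longleftrightarrow> povm d (\<Omega> k) E"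
| "pun_circuit \<Omega> d (PNode d' Ks l r) \<longleftrightarrow> d' = d \<and>
     (\<exists>dl dr. pun_circuit \<Omega> dl l \<and> pun_circuit \<Omega> dr r \<and> unital_qop (dl * dr) d Ks)"

fun circ_eval :: "'v pcirc \<Rightarrow> (nat \<Rightarrow> 'v) \<Rightarrow> complex mat" where
  "circ_eval (PLeaf k E) x = E (x k)"
| "circ_eval (PNode d' Ks l r) x =
     kraus_apply d' Ks (kron (circ_eval l x) (circ_eval r x))"

definition partition_circuit :: "nat \<Rightarrow> 'v pcirc \<Rightarrow> bool" where
  "partition_circuit N c \<longleftrightarrow> distinct (leaves c) \<and> set (leaves c) = {..<N}"

text \<open>Joint sample space \<Omega>(X): assignments on {0..<N}, undefined elsewhere.\<close>
definition joint_space :: "nat \<Rightarrow> (nat \<Rightarrow> 'v set) \<Rightarrow> (nat \<Rightarrow> 'v) set" where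
  "joint_space N \<Omega> = PiE {..<N} \<Omega>"

definition subcomplete_distribution :: "'a set \<Rightarrow> ('a \<Rightarrow> real) \<Rightarrow> bool" where
  "subcomplete_distribution S f \<longleftrightarrow> finite S \<and> (\<forall>x\<in>S. 0 \<le> f x) \<and> sum f S \<le> 1"

end

theory Submission
  imports Defs
begin

definition Bf :: "nat \<Rightarrow> (nat \<Rightarrow> nat \<Rightarrow> complex) \<Rightarrow> (nat \<Rightarrow> complex) \<Rightarrow> (nat \<Rightarrow> complex) \<Rightarrow> complex" where
  "Bf n f x y = (\<Sum>a<n. \<Sum>b<n. cnj (x a) * f a b * y b)"

definition psdf :: "nat \<Rightarrow> (nat \<Rightarrow> nat \<Rightarrow> complex) \<Rightarrow> bool" where
  "psdf n f \<longleftrightarrow> (\<forall>x. Bf n f x x \<in> \<real> \<and> 0 \<le> Re (Bf n f x x))"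

definition gramf :: "nat \<Rightarrow> (nat \<Rightarrow> nat \<Rightarrow> complex) \<Rightarrow> bool" where
  "gramf n f \<longleftrightarrow> (\<exists>(m::nat) w. \<forall>i<n. \<forall>j<n. f i j = (\<Sum>k<m. w k i * cnj (w k j)))"

definition dl :: "nat \<Rightarrow> complex \<Rightarrow> nat \<Rightarrow> complex" where
  "dl p t = (\<lambda>b. if b = p then t else 0)"

lemma Bf_add: "Bf n f (\<lambda>a. x a + y a) (\<lambda>a. x a + y a) = Bf n f x x + Bf n f x y + Bf n f y x + Bf n f y y"
proof -
  have "Bf n f (\<lambda>a. x a + y a) (\<lambda>a. x a + y a) = (\<Sum>a<n. \<Sum>b<n. cnj (x a) * f a b * x b + cnj (x a) * f a b * y b
      + cnj (y a) * f a b * x b + cnj (y a) * f a b * y b)"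
    unfolding Bf_def by (intro sum.cong refl) (simp add: distrib_left distrib_right)
  also have "\<dots> = Bf n f x x + Bf n f x y + Bf n f y x + Bf n f y y"
    unfolding Bf_def by (simp only: sum.distrib)
  finally show ?thesis .
qed

lemma sum_delta_mult: "p < (n::nat) \<Longrightarrow> (\<Sum>b<n. g b * (if b = p then t else 0)) = g p * (t::complex)"
proof -
  assume p: "p < n"
  have "(\<Sum>b<n. g b * (if b = p then t else 0)) = (\<Sum>b<n. if b = p then g b * t else 0)"
    by (intro sum.cong) auto
  also have "\<dots> = g p * t" using p by simp
  finally show ?thesis .
qed

lemma Bf_dl_right: assumes "p < n" shows "Bf n f x (dl p t) = t * (\<Sum>a<n. cnj (x a) * f a p)"
proof -
  have "Bf n f x (dl p t) = (\<Sum>a<n. cnj (x a) * f a p * t)"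
    unfolding Bf_def dl_def by (intro sum.cong refl) (rule sum_delta_mult[OF assms])
  thus ?thesis by (simp add: sum_distrib_left mult.commute)
qed

lemma Bf_dl_left: assumes "p < n" shows "Bf n f (dl p t) y = cnj t * (\<Sum>b<n. f p b * y b)"
proof -
  have "Bf n f (dl p t) y = (\<Sum>a<n. if a = p then (\<Sum>b<n. cnj t * f p b * y b) else 0)"
    unfolding Bf_def dl_def by (intro sum.cong) auto
  also have "\<dots> = (\<Sum>b<n. cnj t * f p b * y b)" using assms by simp
  finally show ?thesis by (simp add: sum_distrib_left mult.assoc)
qed

lemma Bf_dl_both: assumes "p < n" "q < n" shows "Bf n f (dl p s) (dl q t) = cnj s * f p q * t"
  unfolding Bf_dl_left[OF assms(1)] unfolding dl_def sum_delta_mult[OF assms(2)] by (simp add: mult.assoc)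

lemma psdf_diag: assumes "psdf n f" "p < n" shows "f p p \<in> \<real>" "0 \<le> Re (f p p)"
proof -
  have "Bf n f (dl p 1) (dl p 1) = f p p" using assms by (simp add: Bf_dl_both)
  thus "f p p \<in> \<real>" "0 \<le> Re (f p p)" using assms unfolding psdf_def by metis+
qed

lemma psdf_herm: assumes "psdf n f" "i < n" "j < n" shows "f i j = cnj (f j i)"
proof -
  have e: "Bf n f (\<lambda>a. dl i 1 a + dl j t a) (\<lambda>a. dl i 1 a + dl j t a)
        = f i i + f i j * t + cnj t * f j i + cnj t * f j j * t" for t
    by (simp add: Bf_add Bf_dl_both assms)
  have r1: "f i i + f i j * 1 + cnj 1 * f j i + cnj 1 * f j j * 1 \<in> \<real>"
    using assms(1) e[of 1] unfolding psdf_def by metis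
  have r2: "f i i + f i j * \<i> + cnj \<i> * f j i + cnj \<i> * f j j * \<i> \<in> \<real>"
    using assms(1) e[of \<i>] unfolding psdf_def by metis
  have di: "Im (f i i) = 0" "Im (f j j) = 0"
    using psdf_diag(1)[OF assms(1)] assms(2,3) complex_is_Real_iff by blast+
  have "Im (f i i + f i j * 1 + cnj 1 * f j i + cnj 1 * f j j * 1) = 0"
    using r1 complex_is_Real_iff by blast
  hence i1: "Im (f i j) + Im (f j i) = 0" using di by simp
  have "Im (f i i + f i j * \<i> + cnj \<i> * f j i + cnj \<i> * f j j * \<i>) = 0"
    using r2 complex_is_Real_iff by blast
  hence i2: "Re (f i j) - Re (f j i) = 0" using di by simp
  show ?thesis using i1 i2 by (intro complex_eqI) simp_all
qed

lemma psdf_zero_row: assumes ps: "psdf n f" and pq: "p < n" "q < n" and z: "f p p = 0"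
  shows "f p q = 0"
proof (rule ccontr)
  assume c0: "f p q \<noteq> 0"
  define c where "c = f p q"
  have h: "f q p = cnj c" using psdf_herm[OF ps pq(2) pq(1)] c_def by simp
  have e: "Bf n f (\<lambda>a. dl p t a + dl q 1 a) (\<lambda>a. dl p t a + dl q 1 a)
        = cnj t * f p p * t + cnj t * f p q + f q p * t + f q q" for t
    by (simp add: Bf_add Bf_dl_both pq)
  have "0 \<le> Re (Bf n f (\<lambda>a. dl p t a + dl q 1 a) (\<lambda>a. dl p t a + dl q 1 a))" for t
    using ps unfolding psdf_def by blast
  hence ge: "0 \<le> Re (cnj t * c + cnj c * t + f q q)" for t using e z c_def h by simp
  define R where "R = (\<bar>Re (f q q)\<bar> + 1) / (2 * (cmod c)\<^sup>2)"
  have cpos: "(cmod c)\<^sup>2 > 0" using c0 c_def by simp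
  have "Re (cnj (- of_real R * c) * c + cnj c * (- of_real R * c) + f q q) = Re (f q q) - 2 * R * (cmod c)\<^sup>2"
    using cmod_power2[of c] by (simp add: power2_eq_square algebra_simps)
  also have "2 * R * (cmod c)\<^sup>2 = \<bar>Re (f q q)\<bar> + 1" unfolding R_def using cpos by simp
  finally show False using ge[of "- of_real R * c"] by linarith
qed

lemma psdf_gramf: "psdf n f \<Longrightarrow> gramf n f"
proof (induction "card {p. p<n \<and> f p p \<noteq> 0}" arbitrary: f rule: less_induct)
  case less
  note ps = less.prems
  show ?case
  proof (cases "\<exists>p<n. f p p \<noteq> 0")
    case False
    hence "\<forall>i<n. \<forall>j<n. f i j = 0"
      using psdf_zero_row[OF ps] by auto
    thus ?thesis unfolding gramf_def by (intro exI[of _ "0::nat"] exI[of _ "\<lambda>_ _. 0"]) simp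
  next
    case True
    then obtain p where p: "p < n" "f p p \<noteq> 0" by blast
    define r where "r = Re (f p p)"
    have fpp: "f p p = of_real r" using psdf_diag[OF ps p(1)] r_def by (simp add: of_real_Re)
    have rpos: "r > 0" using psdf_diag(2)[OF ps p(1)] p(2) fpp r_def by (metis of_real_0 less_eq_real_def)
    define s where "s = sqrt r"
    have spos: "s > 0" and ss: "s * s = r" using rpos s_def by auto
    define v where "v i = f i p / of_real s" for i
    define g where "g i j = f i j - v i * cnj (v j)" for i j
    have fv: "f a p = of_real s * v a" for a using spos by (simp add: v_def)
    have fv2: "f p b = of_real s * cnj (v b)" if "b < n" for b
      using psdf_herm[OF ps p(1) that] fv[of b] by simp
    have psg: "psdf n g" unfolding psdf_def
    proof
      fix x
      define z where "z = (\<Sum>a<n. cnj (x a) * v a)"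
      define t where "t = - cnj z / of_real s"
      have "Bf n g x x = Bf n f x x - (\<Sum>a<n. \<Sum>b<n. (cnj (x a) * v a) * (cnj (v b) * x b))"
        unfolding Bf_def g_def by (simp add: sum_subtractf[symmetric] algebra_simps)
      also have "(\<Sum>a<n. \<Sum>b<n. (cnj (x a) * v a) * (cnj (v b) * x b)) = z * cnj z"
        unfolding z_def cnj_sum sum_product by (intro sum.cong refl) (simp add: mult.commute)
      finally have g1: "Bf n g x x = Bf n f x x - z * cnj z" .
      have s1: "(\<Sum>a<n. cnj (x a) * f a p) = of_real s * z"
        unfolding z_def fv by (simp add: sum_distrib_left mult_ac)
      have s2: "(\<Sum>b<n. f p b * x b) = of_real s * cnj z"
        unfolding z_def by (simp add: fv2 sum_distrib_left mult_ac)
      have "Bf n f (\<lambda>a. x a + dl p t a) (\<lambda>a. x a + dl p t a)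
          = Bf n f x x + t * (of_real s * z) + cnj t * (of_real s * cnj z) + cnj t * f p p * t"
        unfolding Bf_add Bf_dl_both[OF p(1) p(1)] Bf_dl_right[OF p(1), of f x t] Bf_dl_left[OF p(1), of f t x] s1 s2 ..
      also have "\<dots> = Bf n f x x - z * cnj z"
      proof -
        have s0: "(of_real s :: complex) \<noteq> 0" using spos by simp
        have a1: "t * of_real s = - cnj z" unfolding t_def using s0 by simp
        have a2: "cnj t * of_real s = - z" unfolding t_def using s0 by simp
        have a3: "cnj t * of_real r * t = z * cnj z"
        proof -
          have rr: "(of_real r::complex) = of_real s * of_real s" by (metis ss of_real_mult)
          have "cnj t * of_real r * t = (cnj t * of_real s) * (t * of_real s)"
            unfolding rr by (simp only: mult_ac)
          thus ?thesis unfolding a1 a2 by simp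
        qed
        have b1: "t * (of_real s * z) = - cnj z * z" using a1 by (metis mult.assoc mult.commute)
        have b2: "cnj t * (of_real s * cnj z) = - z * cnj z" using a2 by (metis mult.assoc)
        show ?thesis unfolding fpp b1 b2 a3 by (simp add: mult.commute)
      qed
      finally have "Bf n g x x = Bf n f (\<lambda>a. x a + dl p t a) (\<lambda>a. x a + dl p t a)" using g1 by simp
      thus "Bf n g x x \<in> \<real> \<and> 0 \<le> Re (Bf n g x x)" using ps unfolding psdf_def by simp
    qed
    have sub: "{q. q<n \<and> g q q \<noteq> 0} \<subseteq> {q. q<n \<and> f q q \<noteq> 0} - {p}"
    proof
      fix q assume q: "q \<in> {q. q<n \<and> g q q \<noteq> 0}"
      have "v p = of_real (r / s)" unfolding v_def fpp by simp
      hence "v p * cnj (v p) = of_real (r / s * (r / s))" by simp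
      also have "r / s * (r / s) = r" using spos ss by (simp add: field_simps)
      finally have "g p p = 0" unfolding g_def fpp by simp
      moreover have "f q q = 0 \<Longrightarrow> g q q = 0"
      proof -
        assume "f q q = 0"
        hence "f q p = 0" using psdf_zero_row[OF ps, of q p] q p(1) by simp
        thus "g q q = 0" using \<open>f q q = 0\<close> unfolding g_def v_def by simp
      qed
      ultimately show "q \<in> {q. q<n \<and> f q q \<noteq> 0} - {p}" using q by auto
    qed
    have cl: "card {q. q<n \<and> g q q \<noteq> 0} < card {p. p<n \<and> f p p \<noteq> 0}"
      by (rule psubset_card_mono) (use sub p in auto)
    have "gramf n g" by (rule less.hyps[OF cl psg])
    then obtain m :: nat and w where w: "\<forall>i<n. \<forall>j<n. g i j = (\<Sum>k<m. w k i * cnj (w k j))"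
      unfolding gramf_def by blast
    have "\<forall>i<n. \<forall>j<n. f i j = (\<Sum>k<Suc m. (w(m := v)) k i * cnj ((w(m := v)) k j))"
    proof (intro allI impI)
      fix i j assume ij: "i < n" "j < n"
      have "(\<Sum>k<Suc m. (w(m := v)) k i * cnj ((w(m := v)) k j))
          = (\<Sum>k<m. w k i * cnj (w k j)) + v i * cnj (v j)"
        by (simp add: sum.lessThan_Suc)
      also have "\<dots> = g i j + v i * cnj (v j)" using w ij by simp
      also have "\<dots> = f i j" unfolding g_def by simp
      finally show "f i j = (\<Sum>k<Suc m. (w(m := v)) k i * cnj ((w(m := v)) k j))" by simp
    qed
    thus ?thesis unfolding gramf_def by (intro exI[of _ "Suc m"] exI[of _ "w(m := v)"])
  qed
qed

lemma sum_split_add: "(\<Sum>k<a+(b::nat). h k) = (\<Sum>k<a. h k) + (\<Sum>k<b. h (a+k::nat) :: complex)"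
  by (induction b) (simp_all add: add.assoc)

lemma sum_div_mod: "(\<Sum>k<(m1::nat)*m2. h (k div m2) (k mod m2)) = (\<Sum>a<m1. \<Sum>b<m2. h a b :: complex)"
proof (induction m1)
  case 0 then show ?case by simp
next
  case (Suc m1)
  have "(\<Sum>k<Suc m1*m2. h (k div m2) (k mod m2)) = (\<Sum>k<m1*m2 + m2. h (k div m2) (k mod m2))"
    by (simp add: add.commute)
  also have "\<dots> = (\<Sum>k<m1*m2. h (k div m2) (k mod m2)) + (\<Sum>k<m2. h ((m1*m2+k) div m2) ((m1*m2+k) mod m2))"
    by (rule sum_split_add)
  also have "(\<Sum>k<m2. h ((m1*m2+k) div m2) ((m1*m2+k) mod m2)) = (\<Sum>k<m2. h m1 k)"
    by (intro sum.cong refl) simp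
  finally show ?case using Suc by simp
qed

lemma adj_entry: "i < dim_col K \<Longrightarrow> j < dim_row K \<Longrightarrow> mat_adjoint K $$ (i,j) = cnj (K $$ (j,i))"
  unfolding mat_adjoint_def by (simp add: mat_of_rows_def)

lemma adj_dims: "dim_row (mat_adjoint K) = dim_col K" "dim_col (mat_adjoint K) = dim_row K"
  unfolding mat_adjoint_def by (simp_all add: mat_of_rows_def)

lemma adj_carrier: "K \<in> carrier_mat d n \<Longrightarrow> mat_adjoint K \<in> carrier_mat n d"
  by (rule carrier_matI) (simp_all add: adj_dims)

lemma mult_entry: "A \<in> carrier_mat n m \<Longrightarrow> B \<in> carrier_mat m k \<Longrightarrow> i < n \<Longrightarrow> j < k \<Longrightarrow>
  (A * B) $$ (i,j) = (\<Sum>a<m. A $$ (i,a) * B $$ (a,j))"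
  by (simp add: scalar_prod_def atLeast0LessThan)

lemma conj_entry: assumes K: "K \<in> carrier_mat d n" and A: "A \<in> carrier_mat n n" and ij: "i < d" "j < d"
  shows "(K * A * mat_adjoint K) $$ (i,j) = (\<Sum>b<n. (\<Sum>a<n. K $$ (i,a) * A $$ (a,b)) * cnj (K $$ (j,b)))"
proof -
  have KA: "K * A \<in> carrier_mat d n" using K A by simp
  have m: "(K * A * mat_adjoint K) $$ (i,j) = (\<Sum>b<n. (K * A) $$ (i,b) * mat_adjoint K $$ (b,j))"
    by (rule mult_entry[OF KA adj_carrier[OF K] ij])
  have e: "\<And>b. b<n \<Longrightarrow> (K*A)$$(i,b) = (\<Sum>a<n. K $$ (i,a) * A $$ (a,b))"
    by (rule mult_entry[OF K A ij(1)])
  have adjE: "\<And>b. b<n \<Longrightarrow> mat_adjoint K $$ (b,j) = cnj (K$$(j,b))" using adj_entry K ij by auto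
  have "(\<Sum>b<n. (K * A) $$ (i,b) * mat_adjoint K $$ (b,j)) = (\<Sum>b<n. (\<Sum>a<n. K $$ (i,a) * A $$ (a,b)) * cnj (K $$ (j,b)))"
    by (intro sum.cong refl) (simp only: e adjE lessThan_iff)
  with m show ?thesis by simp
qed

lemma conj_carrier: "K \<in> carrier_mat d n \<Longrightarrow> A \<in> carrier_mat n n \<Longrightarrow> K * A * mat_adjoint K \<in> carrier_mat d d"
  using adj_carrier by (metis mult_carrier_mat)

lemma kraus_Cons: "kraus_apply d (K # Ks) A = K * A * mat_adjoint K + kraus_apply d Ks A"
  unfolding kraus_apply_def by simp

lemma kraus_Nil: "kraus_apply d [] A = 0\<^sub>m d d"
  unfolding kraus_apply_def by simp

lemma kraus_carrier: "\<forall>K\<in>set Ks. K \<in> carrier_mat d n \<Longrightarrow> A \<in> carrier_mat n n \<Longrightarrow> kraus_apply d Ks A \<in> carrier_mat d d"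
  by (induction Ks) (auto simp: kraus_Cons kraus_Nil conj_carrier)

lemma gramf_zero: "gramf n (\<lambda>i j. 0)"
  unfolding gramf_def by (intro exI[of _ "0::nat"]) simp

lemma gramf_cong: assumes "gramf n f" "\<And>i j. i < n \<Longrightarrow> j < n \<Longrightarrow> f i j = g i j" shows "gramf n g"
proof -
  obtain m :: nat and w where w: "\<forall>i<n. \<forall>j<n. f i j = (\<Sum>k<m. w k i * cnj (w k j))"
    using assms(1) unfolding gramf_def by blast
  show ?thesis unfolding gramf_def by (intro exI[of _ m] exI[of _ w]) (use w assms(2) in simp)
qed

lemma gramf_add: assumes "gramf n f" "gramf n g" shows "gramf n (\<lambda>i j. f i j + g i j)"
proof -
  obtain m1 :: nat and w1 where w1: "\<forall>i<n. \<forall>j<n. f i j = (\<Sum>k<m1. w1 k i * cnj (w1 k j))"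
    using assms(1) unfolding gramf_def by blast
  obtain m2 :: nat and w2 where w2: "\<forall>i<n. \<forall>j<n. g i j = (\<Sum>k<m2. w2 k i * cnj (w2 k j))"
    using assms(2) unfolding gramf_def by blast
  define w where "w k = (if k < m1 then w1 k else w2 (k - m1))" for k
  have "\<forall>i<n. \<forall>j<n. f i j + g i j = (\<Sum>k<m1+m2. w k i * cnj (w k j))"
  proof (intro allI impI)
    fix i j assume ij: "i < n" "j < n"
    have "(\<Sum>k<m1+m2. w k i * cnj (w k j)) = (\<Sum>k<m1. w k i * cnj (w k j)) + (\<Sum>k<m2. w (m1+k) i * cnj (w (m1+k) j))"
      by (rule sum_split_add)
    also have "(\<Sum>k<m1. w k i * cnj (w k j)) = f i j" using w1 ij unfolding w_def by simp
    also have "(\<Sum>k<m2. w (m1+k) i * cnj (w (m1+k) j)) = g i j" using w2 ij unfolding w_def by simp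
    finally show "f i j + g i j = (\<Sum>k<m1+m2. w k i * cnj (w k j))" by simp
  qed
  thus ?thesis unfolding gramf_def by (intro exI[of _ "m1+m2"] exI[of _ w])
qed

lemma gramf_conj: assumes K: "K \<in> carrier_mat d n" and g: "gramf n (\<lambda>a b. A $$ (a,b))"
  shows "gramf d (\<lambda>i j. (\<Sum>b<n. (\<Sum>a<n. K $$ (i,a) * A $$ (a,b)) * cnj (K $$ (j,b))))"
proof -
  obtain m :: nat and w where w: "\<forall>i<n. \<forall>j<n. A $$ (i,j) = (\<Sum>k<m. w k i * cnj (w k j))"
    using g unfolding gramf_def by blast
  define W where "W k i = (\<Sum>a<n. K $$ (i,a) * w k a)" for k i
  have "\<forall>i<d. \<forall>j<d. (\<Sum>b<n. (\<Sum>a<n. K $$ (i,a) * A $$ (a,b)) * cnj (K $$ (j,b))) = (\<Sum>k<m. W k i * cnj (W k j))"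
  proof (intro allI impI)
    fix i j assume ij: "i < d" "j < d"
    have "(\<Sum>b<n. (\<Sum>a<n. K $$ (i,a) * A $$ (a,b)) * cnj (K $$ (j,b)))
        = (\<Sum>b<n. \<Sum>a<n. \<Sum>k<m. K $$ (i,a) * w k a * cnj (w k b) * cnj (K $$ (j,b)))"
      using w by (simp add: sum_distrib_left sum_distrib_right mult.assoc)
    also have "\<dots> = (\<Sum>k<m. \<Sum>a<n. \<Sum>b<n. K $$ (i,a) * w k a * cnj (w k b) * cnj (K $$ (j,b)))"
      apply (subst sum.swap)
      apply (subst (2) sum.swap)
      apply (subst sum.swap)
      ..
    also have "\<dots> = (\<Sum>k<m. W k i * cnj (W k j))"
      unfolding W_def cnj_sum sum_product by (intro sum.cong refl) (simp add: mult_ac)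
    finally show "(\<Sum>b<n. (\<Sum>a<n. K $$ (i,a) * A $$ (a,b)) * cnj (K $$ (j,b))) = (\<Sum>k<m. W k i * cnj (W k j))" .
  qed
  thus ?thesis unfolding gramf_def by (intro exI[of _ m] exI[of _ W])
qed

lemma kraus_gramf: "\<forall>K\<in>set Ks. K \<in> carrier_mat d n \<Longrightarrow> A \<in> carrier_mat n n \<Longrightarrow> gramf n (\<lambda>a b. A $$ (a,b))
  \<Longrightarrow> gramf d (\<lambda>i j. kraus_apply d Ks A $$ (i,j))"
proof (induction Ks)
  case Nil
  show ?case by (rule gramf_cong[OF gramf_zero]) (simp add: kraus_Nil)
next
  case (Cons K Ks)
  have K: "K \<in> carrier_mat d n" using Cons.prems by simp
  have "gramf d (\<lambda>i j. (\<Sum>b<n. (\<Sum>a<n. K $$ (i,a) * A $$ (a,b)) * cnj (K $$ (j,b))) + kraus_apply d Ks A $$ (i,j))"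
    by (rule gramf_add[OF gramf_conj[OF K Cons.prems(3)] Cons.IH]) (use Cons.prems in auto)
  have C1: "K * A * mat_adjoint K \<in> carrier_mat d d" using conj_carrier[OF K] Cons.prems by simp
  have C2: "kraus_apply d Ks A \<in> carrier_mat d d" using kraus_carrier[of Ks d n A] Cons.prems by simp
  show ?case
  proof (rule gramf_cong[OF \<open>gramf d _\<close>])
    fix i j assume ij: "i < d" "j < d"
    have "kraus_apply d (K # Ks) A $$ (i,j) = (K * A * mat_adjoint K) $$ (i,j) + kraus_apply d Ks A $$ (i,j)"
      unfolding kraus_Cons using C1 C2 ij by simp
    also have "(K * A * mat_adjoint K) $$ (i,j) = (\<Sum>b<n. (\<Sum>a<n. K $$ (i,a) * A $$ (a,b)) * cnj (K $$ (j,b)))"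
      by (rule conj_entry[OF K _ ij]) (use Cons.prems in simp)
    finally show "(\<Sum>b<n. (\<Sum>a<n. K $$ (i,a) * A $$ (a,b)) * cnj (K $$ (j,b))) + kraus_apply d Ks A $$ (i,j)
        = kraus_apply d (K # Ks) A $$ (i,j)" by simp
  qed
qed

lemma kron_carrier: "A \<in> carrier_mat a a \<Longrightarrow> B \<in> carrier_mat b b \<Longrightarrow> kron A B \<in> carrier_mat (a*b) (a*b)"
  unfolding kron_def by simp

lemma kron_entry: assumes "A \<in> carrier_mat a a" "B \<in> carrier_mat b b" "i < a*b" "j < a*b"
  shows "kron A B $$ (i,j) = A $$ (i div b, j div b) * B $$ (i mod b, j mod b)"
  using assms unfolding kron_def by simp

lemma kron_gramf: assumes A: "A \<in> carrier_mat a a" and B: "B \<in> carrier_mat b b"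
  and gA: "gramf a (\<lambda>i j. A $$ (i,j))" and gB: "gramf b (\<lambda>i j. B $$ (i,j))"
  shows "gramf (a*b) (\<lambda>i j. kron A B $$ (i,j))"
proof -
  obtain m1 :: nat and w where w: "\<forall>i<a. \<forall>j<a. A $$ (i,j) = (\<Sum>k<m1. w k i * cnj (w k j))"
    using gA unfolding gramf_def by blast
  obtain m2 :: nat and u where u: "\<forall>i<b. \<forall>j<b. B $$ (i,j) = (\<Sum>k<m2. u k i * cnj (u k j))"
    using gB unfolding gramf_def by blast
  define W where "W k i = w (k div m2) (i div b) * u (k mod m2) (i mod b)" for k i
  have "\<forall>i<a*b. \<forall>j<a*b. kron A B $$ (i,j) = (\<Sum>k<m1*m2. W k i * cnj (W k j))"
  proof (intro allI impI)
    fix i j assume ij: "i < a*b" "j < a*b"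
    have b0: "b > 0" using ij by (cases b) auto
    have d: "i div b < a" "j div b < a" using ij by (simp_all add: less_mult_imp_div_less)
    have m: "i mod b < b" "j mod b < b" using b0 by simp_all
    have "kron A B $$ (i,j) = A $$ (i div b, j div b) * B $$ (i mod b, j mod b)"
      by (rule kron_entry[OF A B ij])
    also have "\<dots> = (\<Sum>k1<m1. w k1 (i div b) * cnj (w k1 (j div b))) * (\<Sum>k2<m2. u k2 (i mod b) * cnj (u k2 (j mod b)))"
      using w u d m by simp
    also have "\<dots> = (\<Sum>k1<m1. \<Sum>k2<m2. (w k1 (i div b) * u k2 (i mod b)) * cnj (w k1 (j div b) * u k2 (j mod b)))"
      unfolding sum_product by (intro sum.cong refl) (simp add: mult_ac)
    also have "\<dots> = (\<Sum>k<m1*m2. W k i * cnj (W k j))"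
      unfolding W_def by (rule sum_div_mod[symmetric])
    finally show "kron A B $$ (i,j) = (\<Sum>k<m1*m2. W k i * cnj (W k j))" .
  qed
  thus ?thesis unfolding gramf_def by (intro exI[of _ "m1*m2"] exI[of _ W])
qed

lemma psd_psdf: assumes "psd n A" shows "psdf n (\<lambda>a b. A $$ (a,b))"
  unfolding psdf_def
proof
  fix x
  have A: "A \<in> carrier_mat n n" using assms unfolding psd_def by simp
  define v :: "complex vec" where "v = vec n x"
  have v: "v \<in> carrier_vec n" unfolding v_def by simp
  have "conjugate v \<bullet> (A *\<^sub>v v) = (\<Sum>a<n. cnj (x a) * (\<Sum>b<n. A $$ (a,b) * x b))"
    using A unfolding v_def by (simp add: scalar_prod_def atLeast0LessThan)
  also have "\<dots> = Bf n (\<lambda>a b. A $$ (a,b)) x x"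
    unfolding Bf_def by (simp add: sum_distrib_left mult.assoc)
  finally have e: "conjugate v \<bullet> (A *\<^sub>v v) = Bf n (\<lambda>a b. A $$ (a,b)) x x" .
  show "Bf n (\<lambda>a b. A $$ (a,b)) x x \<in> \<real> \<and> 0 \<le> Re (Bf n (\<lambda>a b. A $$ (a,b)) x x)"
    using assms v unfolding psd_def Let_def e[symmetric] by blast
qed

lemma msum_carrier: "msum n f S \<in> carrier_mat n n"
  unfolding msum_def by simp

lemma msum_dims[simp]: "dim_row (msum n f S) = n" "dim_col (msum n f S) = n"
  unfolding msum_def by simp_all

lemma msum_entry: "i < n \<Longrightarrow> j < n \<Longrightarrow> msum n f S $$ (i,j) = (\<Sum>s\<in>S. f s $$ (i,j))"
  unfolding msum_def by simp

lemma msum_cong: "(\<And>s. s \<in> S \<Longrightarrow> f s = g s) \<Longrightarrow> msum n f S = msum n g S"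
  unfolding msum_def by (intro eq_matI) (auto intro: sum.cong)

lemma msum_reindex: "inj_on h A \<Longrightarrow> msum n f (h ` A) = msum n (\<lambda>x. f (h x)) A"
  unfolding msum_def by (intro eq_matI) (simp_all add: sum.reindex)

lemma conj_msum: assumes K: "K \<in> carrier_mat d n" and f: "\<And>s. s \<in> S \<Longrightarrow> f s \<in> carrier_mat n n"
  shows "K * msum n f S * mat_adjoint K = msum d (\<lambda>s. K * f s * mat_adjoint K) S"
proof (rule eq_matI)
  have C1: "K * msum n f S * mat_adjoint K \<in> carrier_mat d d" by (rule conj_carrier[OF K msum_carrier])
  show "dim_row (K * msum n f S * mat_adjoint K) = dim_row (msum d (\<lambda>s. K * f s * mat_adjoint K) S)"
    using C1 K by (simp add: adj_dims)
  show "dim_col (K * msum n f S * mat_adjoint K) = dim_col (msum d (\<lambda>s. K * f s * mat_adjoint K) S)"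
    using C1 K by (simp add: adj_dims)
  fix i j assume "i < dim_row (msum d (\<lambda>s. K * f s * mat_adjoint K) S)" "j < dim_col (msum d (\<lambda>s. K * f s * mat_adjoint K) S)"
  hence ij: "i < d" "j < d" by simp_all
  have "(K * msum n f S * mat_adjoint K) $$ (i,j) = (\<Sum>b<n. (\<Sum>a<n. K $$ (i,a) * msum n f S $$ (a,b)) * cnj (K $$ (j,b)))"
    by (rule conj_entry[OF K msum_carrier ij])
  also have "\<dots> = (\<Sum>b<n. \<Sum>a<n. \<Sum>s\<in>S. K $$ (i,a) * f s $$ (a,b) * cnj (K $$ (j,b)))"
    by (simp add: msum_entry sum_distrib_left sum_distrib_right)
  also have "\<dots> = (\<Sum>b<n. \<Sum>s\<in>S. \<Sum>a<n. K $$ (i,a) * f s $$ (a,b) * cnj (K $$ (j,b)))"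
    by (intro sum.cong refl) (rule sum.swap)
  also have "\<dots> = (\<Sum>s\<in>S. \<Sum>b<n. \<Sum>a<n. K $$ (i,a) * f s $$ (a,b) * cnj (K $$ (j,b)))"
    by (rule sum.swap)
  also have "\<dots> = (\<Sum>s\<in>S. (K * f s * mat_adjoint K) $$ (i,j))"
    by (intro sum.cong refl) (simp add: conj_entry[OF K f ij] sum_distrib_right)
  also have "\<dots> = msum d (\<lambda>s. K * f s * mat_adjoint K) S $$ (i,j)"
    by (simp add: msum_entry ij)
  finally show "(K * msum n f S * mat_adjoint K) $$ (i,j) = msum d (\<lambda>s. K * f s * mat_adjoint K) S $$ (i,j)" .
qed

lemma add_msum: assumes "\<And>s. s \<in> S \<Longrightarrow> g s \<in> carrier_mat d d"
  shows "msum d f S + msum d g S = msum d (\<lambda>s. f s + g s) S"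
proof (rule eq_matI)
  fix i j assume "i < dim_row (msum d (\<lambda>s. f s + g s) S)" "j < dim_col (msum d (\<lambda>s. f s + g s) S)"
  hence ij: "i < d" "j < d" by simp_all
  have "(msum d f S + msum d g S) $$ (i,j) = (\<Sum>s\<in>S. f s $$ (i,j)) + (\<Sum>s\<in>S. g s $$ (i,j))"
    using msum_carrier[of d g S] ij by (simp add: msum_entry)
  also have "\<dots> = (\<Sum>s\<in>S. (f s + g s) $$ (i,j))"
    unfolding sum.distrib[symmetric]
  proof (intro sum.cong refl)
    fix x assume "x \<in> S"
    hence "g x \<in> carrier_mat d d" by (rule assms)
    thus "f x $$ (i, j) + g x $$ (i, j) = (f x + g x) $$ (i, j)" using ij by simp
  qed
  finally show "(msum d f S + msum d g S) $$ (i,j) = msum d (\<lambda>s. f s + g s) S $$ (i,j)"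
    using ij by (simp add: msum_entry)
qed (simp_all add: msum_def)

lemma kraus_msum: assumes K: "\<forall>K\<in>set Ks. K \<in> carrier_mat d n" and f: "\<And>s. s \<in> S \<Longrightarrow> f s \<in> carrier_mat n n"
  shows "kraus_apply d Ks (msum n f S) = msum d (\<lambda>s. kraus_apply d Ks (f s)) S"
  using K
proof (induction Ks)
  case Nil
  show ?case unfolding kraus_Nil msum_def by (intro eq_matI) simp_all
next
  case (Cons K Ks)
  have K: "K \<in> carrier_mat d n" and Ks: "\<forall>K\<in>set Ks. K \<in> carrier_mat d n" using Cons.prems by auto
  have c: "K * msum n f S * mat_adjoint K = msum d (\<lambda>s. K * f s * mat_adjoint K) S" by (rule conj_msum[OF K f])
  have "kraus_apply d (K # Ks) (msum n f S) = msum d (\<lambda>s. K * f s * mat_adjoint K) S + msum d (\<lambda>s. kraus_apply d Ks (f s)) S"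
    unfolding kraus_Cons c Cons.IH[OF Ks] ..
  also have "\<dots> = msum d (\<lambda>s. kraus_apply d (K # Ks) (f s)) S"
    unfolding kraus_Cons by (rule add_msum) (use kraus_carrier[OF Ks f] in simp)
  finally show ?case .
qed

lemma kron_msum: assumes f: "\<And>s. s \<in> S \<Longrightarrow> f s \<in> carrier_mat a a" and g: "\<And>t. t \<in> T \<Longrightarrow> g t \<in> carrier_mat b b"
  shows "kron (msum a f S) (msum b g T) = msum (a*b) (\<lambda>p. kron (f (fst p)) (g (snd p))) (S \<times> T)"
proof (rule eq_matI)
  fix i j assume "i < dim_row (msum (a*b) (\<lambda>p. kron (f (fst p)) (g (snd p))) (S \<times> T))"
    "j < dim_col (msum (a*b) (\<lambda>p. kron (f (fst p)) (g (snd p))) (S \<times> T))"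
  hence ij: "i < a*b" "j < a*b" by simp_all
  have b0: "b > 0" using ij by (cases b) auto
  have d: "i div b < a" "j div b < a" using ij by (simp_all add: less_mult_imp_div_less)
  have m: "i mod b < b" "j mod b < b" using b0 by simp_all
  have "kron (msum a f S) (msum b g T) $$ (i,j) = msum a f S $$ (i div b, j div b) * msum b g T $$ (i mod b, j mod b)"
    by (rule kron_entry[OF msum_carrier msum_carrier ij])
  also have "\<dots> = (\<Sum>s\<in>S. \<Sum>t\<in>T. f s $$ (i div b, j div b) * g t $$ (i mod b, j mod b))"
    using d m by (simp add: msum_entry sum_product)
  also have "\<dots> = (\<Sum>p\<in>S \<times> T. f (fst p) $$ (i div b, j div b) * g (snd p) $$ (i mod b, j mod b))"
    by (simp add: sum.cartesian_product case_prod_unfold)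
  also have "\<dots> = (\<Sum>p\<in>S \<times> T. kron (f (fst p)) (g (snd p)) $$ (i,j))"
  proof (intro sum.cong refl)
    fix p assume "p \<in> S \<times> T"
    hence fp: "f (fst p) \<in> carrier_mat a a" and gp: "g (snd p) \<in> carrier_mat b b" using f g by auto
    show "f (fst p) $$ (i div b, j div b) * g (snd p) $$ (i mod b, j mod b) = kron (f (fst p)) (g (snd p)) $$ (i,j)"
      using kron_entry[OF fp gp ij] by simp
  qed
  finally show "kron (msum a f S) (msum b g T) $$ (i,j) = msum (a*b) (\<lambda>p. kron (f (fst p)) (g (snd p))) (S \<times> T) $$ (i,j)"
    using ij by (simp add: msum_entry)
qed (simp_all add: msum_def kron_def)

lemma kron_one: "kron (1\<^sub>m a) (1\<^sub>m b) = 1\<^sub>m (a*b)"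
proof (rule eq_matI)
  fix i j assume "i < dim_row (1\<^sub>m (a*b))" "j < dim_col (1\<^sub>m (a*b))"
  hence ij: "i < a*b" "j < a*b" by auto
  have b0: "b > 0" using ij by (cases b) auto
  have d: "i div b < a" "j div b < a" using ij by (simp_all add: less_mult_imp_div_less)
  have m: "i mod b < b" "j mod b < b" using b0 by simp_all
  have eq: "(i div b = j div b \<and> i mod b = j mod b) = (i = j)" by (metis div_mult_mod_eq)
  show "kron (1\<^sub>m a) (1\<^sub>m b) $$ (i,j) = 1\<^sub>m (a*b) $$ (i,j)"
    unfolding kron_entry[OF one_carrier_mat one_carrier_mat ij] using d m ij eq by auto
qed (simp_all add: kron_def)

lemma mtrace_mult: "X \<in> carrier_mat n n \<Longrightarrow> R \<in> carrier_mat n n \<Longrightarrow>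
  mtrace (X * R) = (\<Sum>i<n. \<Sum>a<n. X $$ (i,a) * R $$ (a,i))"
proof -
  assume X: "X \<in> carrier_mat n n" and R: "R \<in> carrier_mat n n"
  have "mtrace (X * R) = (\<Sum>i<n. (X * R) $$ (i,i))" unfolding mtrace_def using X by simp
  also have "\<dots> = (\<Sum>i<n. \<Sum>a<n. X $$ (i,a) * R $$ (a,i))"
    by (intro sum.cong refl) (rule mult_entry[OF X R], simp_all)
  finally show ?thesis .
qed

lemma mtrace_msum: assumes f: "\<And>s. s \<in> S \<Longrightarrow> f s \<in> carrier_mat n n" and R: "R \<in> carrier_mat n n"
  shows "mtrace (msum n f S * R) = (\<Sum>s\<in>S. mtrace (f s * R))"
proof -
  have "mtrace (msum n f S * R) = (\<Sum>i<n. \<Sum>a<n. \<Sum>s\<in>S. f s $$ (i,a) * R $$ (a,i))"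
    unfolding mtrace_mult[OF msum_carrier R] by (simp add: msum_entry sum_distrib_right)
  also have "\<dots> = (\<Sum>s\<in>S. \<Sum>i<n. \<Sum>a<n. f s $$ (i,a) * R $$ (a,i))"
    by (simp only: sum.swap[of _ S])
  also have "\<dots> = (\<Sum>s\<in>S. mtrace (f s * R))"
    by (intro sum.cong refl) (simp add: mtrace_mult[OF f R])
  finally show ?thesis .
qed

lemma mtrace_smult: "X \<in> carrier_mat n n \<Longrightarrow> R \<in> carrier_mat n n \<Longrightarrow>
  mtrace ((c \<cdot>\<^sub>m X) * R) = c * mtrace (X * R)"
proof -
  assume X: "X \<in> carrier_mat n n" and R: "R \<in> carrier_mat n n"
  have cX: "c \<cdot>\<^sub>m X \<in> carrier_mat n n" using X by simp
  show ?thesis unfolding mtrace_mult[OF cX R] mtrace_mult[OF X R] using X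
    by (simp add: sum_distrib_left mult.assoc)
qed

lemma trace_pos: assumes A: "A \<in> carrier_mat n n" and g: "gramf n (\<lambda>i j. A $$ (i,j))" and R: "psd n R"
  shows "mtrace (A * R) \<in> \<real> \<and> 0 \<le> Re (mtrace (A * R))"
proof -
  have Rc: "R \<in> carrier_mat n n" using R unfolding psd_def by simp
  have pR: "psdf n (\<lambda>a b. R $$ (a,b))" by (rule psd_psdf[OF R])
  obtain m :: nat and w where w: "\<forall>i<n. \<forall>j<n. A $$ (i,j) = (\<Sum>k<m. w k i * cnj (w k j))"
    using g unfolding gramf_def by blast
  have "mtrace (A * R) = (\<Sum>i<n. \<Sum>a<n. \<Sum>k<m. w k i * cnj (w k a) * R $$ (a,i))"
    unfolding mtrace_mult[OF A Rc] using w by (simp add: sum_distrib_right)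
  also have "\<dots> = (\<Sum>k<m. \<Sum>i<n. \<Sum>a<n. w k i * cnj (w k a) * R $$ (a,i))"
    by (simp only: sum.swap[of _ "{..<m}"])
  also have "\<dots> = (\<Sum>k<m. Bf n (\<lambda>a b. R $$ (a,b)) (w k) (w k))"
    unfolding Bf_def
  proof (rule sum.cong[OF refl])
    fix k
    have "(\<Sum>i<n. \<Sum>a<n. w k i * cnj (w k a) * R $$ (a, i)) = (\<Sum>a<n. \<Sum>i<n. w k i * cnj (w k a) * R $$ (a, i))"
      by (rule sum.swap)
    also have "\<dots> = (\<Sum>a<n. \<Sum>b<n. cnj (w k a) * R $$ (a, b) * w k b)"
      by (simp add: mult_ac)
    finally show "(\<Sum>i<n. \<Sum>a<n. w k i * cnj (w k a) * R $$ (a, i)) = (\<Sum>a<n. \<Sum>b<n. cnj (w k a) * R $$ (a, b) * w k b)" .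
  qed
  finally have e: "mtrace (A * R) = (\<Sum>k<m. Bf n (\<lambda>a b. R $$ (a,b)) (w k) (w k))" .
  show ?thesis unfolding e using pR unfolding psdf_def
    by (auto intro!: sum_in_Reals sum_nonneg simp: Re_sum)
qed

lemma circ_local: "(\<forall>k\<in>set (leaves c). x k = y k) \<Longrightarrow> circ_eval c x = circ_eval c y"
  by (induction c) auto

lemma circ_props: "pun_circuit \<Omega> d c \<Longrightarrow> (\<forall>k\<in>set (leaves c). x k \<in> \<Omega> k) \<Longrightarrow>
  circ_eval c x \<in> carrier_mat d d \<and> gramf d (\<lambda>i j. circ_eval c x $$ (i,j))"
proof (induction c arbitrary: d)
  case (PLeaf k E)
  hence "psd d (E (x k))" by (simp add: povm_def)
  thus ?case using psdf_gramf[OF psd_psdf] unfolding psd_def by simp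
next
  case (PNode d' Ks l r)
  from PNode.prems(1) obtain dl dr where dd: "d' = d" and pl: "pun_circuit \<Omega> dl l" and pr: "pun_circuit \<Omega> dr r"
    and u: "unital_qop (dl * dr) d Ks" by auto
  have Ks: "\<forall>K\<in>set Ks. K \<in> carrier_mat d (dl * dr)" using u unfolding unital_qop_def quantum_operation_def by simp
  have l: "circ_eval l x \<in> carrier_mat dl dl \<and> gramf dl (\<lambda>i j. circ_eval l x $$ (i,j))"
    using PNode.IH(1)[OF pl] PNode.prems(2) by simp
  have r: "circ_eval r x \<in> carrier_mat dr dr \<and> gramf dr (\<lambda>i j. circ_eval r x $$ (i,j))"
    using PNode.IH(2)[OF pr] PNode.prems(2) by simp
  have kc: "kron (circ_eval l x) (circ_eval r x) \<in> carrier_mat (dl*dr) (dl*dr)"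
    using kron_carrier[of "circ_eval l x" dl "circ_eval r x" dr] l r by simp
  have kg: "gramf (dl*dr) (\<lambda>i j. kron (circ_eval l x) (circ_eval r x) $$ (i,j))"
    using kron_gramf[of "circ_eval l x" dl "circ_eval r x" dr] l r by simp
  show ?case using kraus_carrier[OF Ks kc] kraus_gramf[OF Ks kc kg] dd by simp
qed

lemma circ_finite: "pun_circuit \<Omega> d c \<Longrightarrow> k \<in> set (leaves c) \<Longrightarrow> finite (\<Omega> k)"
proof (induction c arbitrary: d)
  case (PLeaf k E) thus ?case by (simp add: povm_def)
next
  case (PNode d' Ks l r) thus ?case by auto
qed

lemma PiE_single_bij: "inj_on (\<lambda>x. x k) (PiE {k} \<Omega>)" "(\<lambda>x. x k) ` PiE {k} \<Omega> = \<Omega> k"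
proof -
  show "inj_on (\<lambda>x. x k) (PiE {k} \<Omega>)"
  proof (rule inj_onI)
    fix x y assume "x \<in> PiE {k} \<Omega>" "y \<in> PiE {k} \<Omega>" "x k = y k"
    thus "x = y"
    proof (intro ext)
      fix m show "x m = y m"
      proof (cases "m = k")
        case True thus ?thesis using \<open>x k = y k\<close> by simp
      next
        case False
        hence "m \<notin> {k}" by simp
        thus ?thesis using PiE_arb[OF \<open>x \<in> PiE {k} \<Omega>\<close>] PiE_arb[OF \<open>y \<in> PiE {k} \<Omega>\<close>] by simp
      qed
    qed
  qed
  show "(\<lambda>x. x k) ` PiE {k} \<Omega> = \<Omega> k"
  proof
    show "(\<lambda>x. x k) ` PiE {k} \<Omega> \<subseteq> \<Omega> k" by auto
    show "\<Omega> k \<subseteq> (\<lambda>x. x k) ` PiE {k} \<Omega>"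
    proof
      fix v assume v: "v \<in> \<Omega> k"
      have "(\<lambda>m. if m = k then v else undefined) \<in> PiE {k} \<Omega>" using v by (auto simp: PiE_def extensional_def)
      thus "v \<in> (\<lambda>x. x k) ` PiE {k} \<Omega>" by (rule rev_image_eqI) simp
    qed
  qed
qed

definition merge :: "nat set \<Rightarrow> (nat \<Rightarrow> 'v) \<times> (nat \<Rightarrow> 'v) \<Rightarrow> nat \<Rightarrow> 'v" where
  "merge L p = (\<lambda>k. if k \<in> L then fst p k else snd p k)"

lemma merge_bij: assumes disj: "L \<inter> R = {}"
  shows "inj_on (merge L) (PiE L \<Omega> \<times> PiE R \<Omega>)" "merge L ` (PiE L \<Omega> \<times> PiE R \<Omega>) = PiE (L \<union> R) \<Omega>"
proof -
  show "inj_on (merge L) (PiE L \<Omega> \<times> PiE R \<Omega>)"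
  proof (rule inj_onI)
    fix p q assume p: "p \<in> PiE L \<Omega> \<times> PiE R \<Omega>" and q: "q \<in> PiE L \<Omega> \<times> PiE R \<Omega>" and e: "merge L p = merge L q"
    have "fst p = fst q"
    proof
      fix k show "fst p k = fst q k"
      proof (cases "k \<in> L")
        case True
        have "merge L p k = merge L q k" using e by simp
        thus ?thesis using True unfolding merge_def by simp
      next
        case False
        have "fst p \<in> PiE L \<Omega>" "fst q \<in> PiE L \<Omega>" using p q by (simp_all add: mem_Times_iff)
        thus ?thesis using PiE_arb[OF _ False] by metis
      qed
    qed
    moreover have "snd p = snd q"
    proof
      fix k show "snd p k = snd q k"
      proof (cases "k \<in> R")
        case True hence "k \<notin> L" using disj by auto
        have "merge L p k = merge L q k" using e by simp
        thus ?thesis using \<open>k \<notin> L\<close> unfolding merge_def by simp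
      next
        case False
        have "snd p \<in> PiE R \<Omega>" "snd q \<in> PiE R \<Omega>" using p q by (simp_all add: mem_Times_iff)
        thus ?thesis using PiE_arb[OF _ False] by metis
      qed
    qed
    ultimately show "p = q" by (simp add: prod_eq_iff)
  qed
  show "merge L ` (PiE L \<Omega> \<times> PiE R \<Omega>) = PiE (L \<union> R) \<Omega>"
  proof
    show "merge L ` (PiE L \<Omega> \<times> PiE R \<Omega>) \<subseteq> PiE (L \<union> R) \<Omega>"
    proof
      fix x assume "x \<in> merge L ` (PiE L \<Omega> \<times> PiE R \<Omega>)"
      then obtain a b where a: "a \<in> PiE L \<Omega>" and b: "b \<in> PiE R \<Omega>" and x: "x = merge L (a, b)" by auto
      show "x \<in> PiE (L \<union> R) \<Omega>" unfolding x merge_def using a b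
        by (auto simp: PiE_def Pi_def extensional_def)
    qed
    show "PiE (L \<union> R) \<Omega> \<subseteq> merge L ` (PiE L \<Omega> \<times> PiE R \<Omega>)"
    proof
      fix x assume x: "x \<in> PiE (L \<union> R) \<Omega>"
      have a: "restrict x L \<in> PiE L \<Omega>" and b: "restrict x R \<in> PiE R \<Omega>" using x by auto
      have "merge L (restrict x L, restrict x R) = x"
      proof
        fix k show "merge L (restrict x L, restrict x R) k = x k"
        proof (cases "k \<in> L \<union> R")
          case True thus ?thesis unfolding merge_def by auto
        next
          case False thus ?thesis unfolding merge_def using PiE_arb[OF x False] by simp
        qed
      qed
      thus "x \<in> merge L ` (PiE L \<Omega> \<times> PiE R \<Omega>)" by (rule image_eqI[OF sym]) (rule SigmaI[OF a b])
    qed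
  qed
qed

lemma circ_sum: "pun_circuit \<Omega> d c \<Longrightarrow> distinct (leaves c) \<Longrightarrow>
  msum d (circ_eval c) (PiE (set (leaves c)) \<Omega>) = 1\<^sub>m d"
proof (induction c arbitrary: d)
  case (PLeaf k E)
  have ce: "circ_eval (PLeaf k E) = (\<lambda>x. E (x k))" by (rule ext) simp
  hence "msum d (circ_eval (PLeaf k E)) (PiE {k} \<Omega>) = msum d (\<lambda>x. E (x k)) (PiE {k} \<Omega>)" by simp
  also have "\<dots> = msum d E ((\<lambda>x. x k) ` PiE {k} \<Omega>)" by (rule msum_reindex[symmetric, OF PiE_single_bij(1)])
  also have "\<dots> = msum d E (\<Omega> k)" unfolding PiE_single_bij(2) ..
  also have "\<dots> = 1\<^sub>m d" using PLeaf.prems by (simp add: povm_def)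
  finally show ?case using ce by simp
next
  case (PNode d' Ks l r)
  from PNode.prems(1) obtain dl dr where dd: "d' = d" and pl: "pun_circuit \<Omega> dl l" and pr: "pun_circuit \<Omega> dr r"
    and u: "unital_qop (dl * dr) d Ks" by auto
  have Ks: "\<forall>K\<in>set Ks. K \<in> carrier_mat d (dl * dr)" using u unfolding unital_qop_def quantum_operation_def by simp
  define L where "L = set (leaves l)"
  define R where "R = set (leaves r)"
  have disj: "L \<inter> R = {}" and dl: "distinct (leaves l)" and dr: "distinct (leaves r)"
    using PNode.prems(2) unfolding L_def R_def by auto
  have sl: "msum dl (circ_eval l) (PiE L \<Omega>) = 1\<^sub>m dl" using PNode.IH(1)[OF pl dl] L_def by simp
  have sr: "msum dr (circ_eval r) (PiE R \<Omega>) = 1\<^sub>m dr" using PNode.IH(2)[OF pr dr] R_def by simp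
  have cl: "circ_eval l a \<in> carrier_mat dl dl" if "a \<in> PiE L \<Omega>" for a
    using circ_props[OF pl, of a] that L_def by auto
  have cr: "circ_eval r b \<in> carrier_mat dr dr" if "b \<in> PiE R \<Omega>" for b
    using circ_props[OF pr, of b] that R_def by auto
  have kc: "kron (circ_eval l (fst p)) (circ_eval r (snd p)) \<in> carrier_mat (dl*dr) (dl*dr)"
    if "p \<in> PiE L \<Omega> \<times> PiE R \<Omega>" for p
    using kron_carrier[OF cl cr] that by auto
  have el: "circ_eval l (merge L p) = circ_eval l (fst p)" for p
    by (rule circ_local) (auto simp: merge_def L_def)
  have er: "circ_eval r (merge L p) = circ_eval r (snd p)" for p
    by (rule circ_local) (use disj in \<open>auto simp: merge_def R_def\<close>)
  have "msum d (circ_eval (PNode d' Ks l r)) (PiE (set (leaves (PNode d' Ks l r))) \<Omega>)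
      = msum d (\<lambda>x. kraus_apply d Ks (kron (circ_eval l x) (circ_eval r x))) (merge L ` (PiE L \<Omega> \<times> PiE R \<Omega>))"
  proof -
    have ce2: "circ_eval (PNode d' Ks l r) = (\<lambda>x. kraus_apply d Ks (kron (circ_eval l x) (circ_eval r x)))"
      by (rule ext) (simp add: dd)
    have "PiE (set (leaves (PNode d' Ks l r))) \<Omega> = merge L ` (PiE L \<Omega> \<times> PiE R \<Omega>)"
      using merge_bij(2)[OF disj, of \<Omega>] by (simp add: L_def R_def)
    thus ?thesis unfolding ce2 by simp
  qed
  also have "\<dots> = msum d (\<lambda>p. kraus_apply d Ks (kron (circ_eval l (fst p)) (circ_eval r (snd p)))) (PiE L \<Omega> \<times> PiE R \<Omega>)"
    by (simp add: msum_reindex[OF merge_bij(1)[OF disj]] el er)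
  also have "\<dots> = kraus_apply d Ks (msum (dl*dr) (\<lambda>p. kron (circ_eval l (fst p)) (circ_eval r (snd p))) (PiE L \<Omega> \<times> PiE R \<Omega>))"
    by (rule kraus_msum[OF Ks kc, symmetric])
  also have "msum (dl*dr) (\<lambda>p. kron (circ_eval l (fst p)) (circ_eval r (snd p))) (PiE L \<Omega> \<times> PiE R \<Omega>)
      = kron (msum dl (circ_eval l) (PiE L \<Omega>)) (msum dr (circ_eval r) (PiE R \<Omega>))"
    by (rule kron_msum[OF cl cr, symmetric])
  also have "\<dots> = 1\<^sub>m (dl * dr)" unfolding sl sr kron_one ..
  also have "kraus_apply d Ks (1\<^sub>m (dl * dr)) = 1\<^sub>m d" using u unfolding unital_qop_def by simp
  finally show ?case .
qed

theorem proposition16: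
  fixes N :: nat and \<Omega> :: "nat \<Rightarrow> 'v set" and C :: "'v pcirc" and d :: nat
    and \<rho> :: "complex mat" and q :: "(nat \<Rightarrow> 'v) \<Rightarrow> real"
  assumes "partition_circuit N C"
    and "pun_circuit \<Omega> d C"
    and "density_matrix d \<rho>"
    and "\<forall>x \<in> joint_space N \<Omega>. 0 \<le> q x \<and> q x \<le> 1"
  shows "(\<forall>x \<in> joint_space N \<Omega>. mtrace (complex_of_real (q x) \<cdot>\<^sub>m circ_eval C x * \<rho>) \<in> \<real>)
    \<and> subcomplete_distribution (joint_space N \<Omega>)
        (\<lambda>x. Re (mtrace (complex_of_real (q x) \<cdot>\<^sub>m circ_eval C x * \<rho>)))"
proof -
  let ?S = "joint_space N \<Omega>"
  have S: "?S = PiE (set (leaves C)) \<Omega>" using assms(1) unfolding partition_circuit_def joint_space_def by simp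
  have dist: "distinct (leaves C)" using assms(1) unfolding partition_circuit_def by simp
  have psdR: "psd d \<rho>" and trR: "mtrace \<rho> = 1" using assms(3) unfolding density_matrix_def by auto
  have Rc: "\<rho> \<in> carrier_mat d d" using psdR unfolding psd_def by simp
  have fin: "finite ?S" unfolding S by (rule finite_PiE) (use circ_finite[OF assms(2)] in auto)
  have mem: "\<forall>k\<in>set (leaves C). x k \<in> \<Omega> k" if "x \<in> ?S" for x using that unfolding S by auto
  have Oc: "circ_eval C x \<in> carrier_mat d d" if "x \<in> ?S" for x using circ_props[OF assms(2) mem[OF that]] by simp
  have T: "mtrace (circ_eval C x * \<rho>) \<in> \<real> \<and> 0 \<le> Re (mtrace (circ_eval C x * \<rho>))" if "x \<in> ?S" for x
    using circ_props[OF assms(2) mem[OF that]] trace_pos psdR by blast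
  have e: "mtrace (complex_of_real (q x) \<cdot>\<^sub>m circ_eval C x * \<rho>) = complex_of_real (q x) * mtrace (circ_eval C x * \<rho>)"
    if "x \<in> ?S" for x by (rule mtrace_smult[OF Oc[OF that] Rc])
  have real: "\<forall>x \<in> ?S. mtrace (complex_of_real (q x) \<cdot>\<^sub>m circ_eval C x * \<rho>) \<in> \<real>"
    using T e by (auto intro: Reals_mult)
  have re: "Re (mtrace (complex_of_real (q x) \<cdot>\<^sub>m circ_eval C x * \<rho>)) = q x * Re (mtrace (circ_eval C x * \<rho>))"
    if "x \<in> ?S" for x using e[OF that] by simp
  have nonneg: "\<forall>x \<in> ?S. 0 \<le> Re (mtrace (complex_of_real (q x) \<cdot>\<^sub>m circ_eval C x * \<rho>))"
    using re T assms(4) by simp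
  have "(\<Sum>x\<in>?S. Re (mtrace (complex_of_real (q x) \<cdot>\<^sub>m circ_eval C x * \<rho>)))
      = (\<Sum>x\<in>?S. q x * Re (mtrace (circ_eval C x * \<rho>)))" by (rule sum.cong) (simp_all add: re)
  also have "\<dots> \<le> (\<Sum>x\<in>?S. Re (mtrace (circ_eval C x * \<rho>)))"
  proof (rule sum_mono)
    fix x assume "x \<in> ?S"
    thus "q x * Re (mtrace (circ_eval C x * \<rho>)) \<le> Re (mtrace (circ_eval C x * \<rho>))"
      using T assms(4) by (simp add: mult_left_le_one_le)
  qed
  also have "\<dots> = Re (\<Sum>x\<in>?S. mtrace (circ_eval C x * \<rho>))" by (simp add: Re_sum)
  also have "(\<Sum>x\<in>?S. mtrace (circ_eval C x * \<rho>)) = mtrace (msum d (circ_eval C) ?S * \<rho>)"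
    by (rule mtrace_msum[symmetric, OF Oc Rc])
  also have "msum d (circ_eval C) ?S = 1\<^sub>m d" unfolding S by (rule circ_sum[OF assms(2) dist])
  also have "1\<^sub>m d * \<rho> = \<rho>" using Rc by simp
  finally have "(\<Sum>x\<in>?S. Re (mtrace (complex_of_real (q x) \<cdot>\<^sub>m circ_eval C x * \<rho>))) \<le> 1" using trR by simp
  thus ?thesis using real nonneg fin unfolding subcomplete_distribution_def by simp
qed

end
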